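(* Let $2\le k<d+1$ and let $\Delta_k^d=\operatorname{tconv}\{-e_I:I\subseteq[d+1],|I|=k\}\subseteq\mathbb{T}^d$ with $V$ the family of these $\binom{d+1}{k}$ points. Then the set of coarse types of the maximal cells of the tropical complex $\mathcal{C}_V$ is, up to permutation of coordinates by $\operatorname{Sym}(d+1)$, the set of tuples $$\Big(\tbinom{d+1-\alpha}{k}+\tbinom{d}{k-1},\ \tbinom{d-1}{k-1},\ \dots,\ \tbinom{d-(\alpha-1)}{k-1},\ \underbrace{0,\dots,0}_{d+1-\alpha}\Big)$$ for $1\le\alpha\le d+2-k$; that is, the set of coarse types of maximal cells is the union of the $\operatorname{Sym}(d+1)$-orbits of these tuples.
   Context: Tropical arithmetic is min-plus; $\mathbb{T}^d=\mathbb{R}^{d+1}/\mathbb{R}(1,\dots,1)$; $e_I=\sum_{i\in I}e_i$. For $m\in[d+1]$ let $\bar S_m=\{\xi\in\mathbb{T}^d:\xi_m=\min_i\xi_i\}$. For $V=(v_1,\dots,v_n)$ and $x\in\mathbb{T}^d$, $\operatorname{type}_V(x)=(T_1,\dots,T_{d+1})$ with $T_m=\{l:v_l\in x+\bar S_m\}$. The cells $\{x:\operatorname{type}_V(x)=\mathcal{T}\}$ have closures forming a polyhedral subdivision $\mathcal{C}_V$ of $\mathbb{T}^d$ (the tropical complex); maximal cells are the inclusion-maximal ones. The coarse type of a cell is $(|T_1|,\dots,|T_{d+1}|)$ for its relative interior points. *)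

theory Defs
  imports "HOL-Analysis.Analysis"
begin

text \<open>We work in \<open>\<real>^(d+1)\<close> with coordinates indexed by a finite type 'n,
  CARD('n) = d+1. The tropical torus is the quotient by \<open>\<real>(1,...,1)\<close>; all
  notions below are invariant under adding multiples of (1,...,1), so cells of
  the tropical complex in the torus correspond exactly to their (cylindrical)
  preimages in \<open>\<real>^(d+1)\<close>.\<close>

definition neg_eI :: "'n::finite set \<Rightarrow> real^'n" where
  "neg_eI I = (\<chi> i. if i \<in> I then -1 else 0)"

text \<open>The point family V of Delta_k^d, indexed by the k-subsets I of [d+1].\<close>
definition hyp_index :: "nat \<Rightarrow> 'n::finite set set" where
  "hyp_index k = {I. card I = k}"

text \<open>Min-plus type: \<open>T_m = {l. v_l \<in> x + S_m}\<close>, where \<open>S_m = {\<xi>. \<xi>_m = min_i \<xi>_i}\<close>.\<close>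
definition trop_type :: "nat \<Rightarrow> real^'n::finite \<Rightarrow> 'n \<Rightarrow> 'n set set" where
  "trop_type k x m = {I \<in> hyp_index k.
      (neg_eI I - x) $ m = Min (range (\<lambda>i. (neg_eI I - x) $ i))}"

definition type_region :: "nat \<Rightarrow> ('n::finite \<Rightarrow> 'n set set) \<Rightarrow> (real^'n) set" where
  "type_region k T = {x. trop_type k x = T}"

definition trop_cells :: "nat \<Rightarrow> (real^'n::finite) set set" where
  "trop_cells k = {closure (type_region k T) | T. type_region k T \<noteq> {}}"

definition maximal_cells :: "nat \<Rightarrow> (real^'n::finite) set set" where
  "maximal_cells k = {C \<in> trop_cells k. \<not> (\<exists>C'\<in>trop_cells k. C \<subset> C')}"

definition coarse_type :: "nat \<Rightarrow> real^'n::finite \<Rightarrow> 'n \<Rightarrow> nat" where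
  "coarse_type k x = (\<lambda>m. card (trop_type k x m))"

text \<open>The tuple of the theorem, positions 0..d (position j+1 in the paper is j here).\<close>
definition hyp_tuple :: "nat \<Rightarrow> nat \<Rightarrow> nat \<Rightarrow> nat \<Rightarrow> nat" where
  "hyp_tuple d k \<alpha> j =
     (if j = 0 then ((d + 1 - \<alpha>) choose k) + (d choose (k - 1))
      else if j < \<alpha> then ((d - j) choose (k - 1)) else 0)"

end

theory Submission
  imports Defs
begin


definition vl :: "real^'n::finite \<Rightarrow> 'n set \<Rightarrow> 'n \<Rightarrow> real" where
  "vl x I i = x$i + (if i \<in> I then 1 else 0)"

lemma trop_type_iff: "I \<in> trop_type k x m \<longleftrightarrow> card I = k \<and> (\<forall>i. vl x I i \<le> vl x I m)"
proof -
  let ?f = "\<lambda>i. (neg_eI I - x) $ i"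
  have f: "?f i = - vl x I i" for i by (simp add: neg_eI_def vl_def)
  have "?f m = Min (range ?f) \<longleftrightarrow> (\<forall>i. ?f m \<le> ?f i)"
  proof
    assume h: "?f m = Min (range ?f)" show "\<forall>i. ?f m \<le> ?f i"
    proof
      fix i have "Min (range ?f) \<le> ?f i" by (rule Min_le) auto
      then show "?f m \<le> ?f i" using h by simp
    qed
  next
    assume "\<forall>i. ?f m \<le> ?f i" then show "?f m = Min (range ?f)" by (intro Min_eqI[symmetric]) auto
  qed
  then show ?thesis unfolding trop_type_def hyp_index_def using f by auto
qed

lemma ex_argmax: "\<exists>m. \<forall>i. vl x I i \<le> vl (x::real^'n::finite) I m"
proof -
  let ?f = "\<lambda>i. vl x I i"
  have "Max (range ?f) \<in> range ?f" by (intro Max_in) auto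
  then obtain m where m: "Max (range ?f) = ?f m" by blast
  have "?f i \<le> ?f m" for i using Max_ge[of "range ?f" "?f i"] m by simp
  then show ?thesis by blast
qed

definition uniqt :: "nat \<Rightarrow> real^'n::finite \<Rightarrow> bool" where
  "uniqt k x = (\<forall>I m m'. I \<in> trop_type k x m \<longrightarrow> I \<in> trop_type k x m' \<longrightarrow> m = m')"

lemma vl_comb: "vl (u *\<^sub>R y + v *\<^sub>R z) I i = u * vl y I i + v * vl z I i" if "u + v = 1"
  using that by (simp add: vl_def algebra_simps)

lemma region_eq:
  assumes "uniqt k x"
  shows "type_region k (trop_type k x) = {y. \<forall>I m i. I \<in> trop_type k x m \<longrightarrow> i \<noteq> m \<longrightarrow> vl y I i < vl y I m}"
proof (intro set_eqI iffI)
  fix y assume "y \<in> type_region k (trop_type k x)"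
  then have ty: "trop_type k y = trop_type k x" by (simp add: type_region_def)
  show "y \<in> {y. \<forall>I m i. I \<in> trop_type k x m \<longrightarrow> i \<noteq> m \<longrightarrow> vl y I i < vl y I m}"
  proof (safe)
    fix I m i assume a: "I \<in> trop_type k x m" "i \<noteq> m"
    then have b: "card I = k" "\<forall>j. vl y I j \<le> vl y I m" using ty trop_type_iff by metis+
    show "vl y I i < vl y I m"
    proof (rule ccontr)
      assume "\<not> ?thesis" then have "vl y I i = vl y I m" using b by (meson not_less order_antisym)
      then have "I \<in> trop_type k y i" using b trop_type_iff by metis
      then show False using a assms ty unfolding uniqt_def by metis
    qed
  qed
next
  fix y assume y: "y \<in> {y. \<forall>I m i. I \<in> trop_type k x m \<longrightarrow> i \<noteq> m \<longrightarrow> vl y I i < vl y I m}"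
  have "I \<in> trop_type k y m \<longleftrightarrow> I \<in> trop_type k x m" for I m
  proof
    assume a: "I \<in> trop_type k x m"
    then have "card I = k" by (simp add: trop_type_iff)
    moreover have "\<forall>i. vl y I i \<le> vl y I m" using y a by (metis (mono_tags, lifting) mem_Collect_eq order_le_less order_refl)
    ultimately show "I \<in> trop_type k y m" by (simp add: trop_type_iff)
  next
    assume a: "I \<in> trop_type k y m"
    then have c: "card I = k" and am: "\<forall>i. vl y I i \<le> vl y I m" by (simp_all add: trop_type_iff)
    obtain m0 where m0: "\<forall>i. vl x I i \<le> vl x I m0" using ex_argmax by blast
    then have x0: "I \<in> trop_type k x m0" using c by (simp add: trop_type_iff)
    have "m = m0"
    proof (rule ccontr)
      assume "m \<noteq> m0" then have "vl y I m < vl y I m0" using y x0 by blast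
      then show False using am by (meson not_less)
    qed
    then show "I \<in> trop_type k x m" using x0 by simp
  qed
  then show "y \<in> type_region k (trop_type k x)" by (auto simp: type_region_def)
qed

lemma region_open_convex:
  assumes "uniqt k (x::real^'n::finite)"
  shows "open (type_region k (trop_type k x))" "convex (type_region k (trop_type k x))"
proof -
  define B where "B I m i = {y::real^'n. I \<in> trop_type k x m \<longrightarrow> i \<noteq> m \<longrightarrow> vl y I i < vl y I m}" for I m i
  have eq: "type_region k (trop_type k x) = (\<Inter>I. \<Inter>m. \<Inter>i. B I m i)"
    unfolding region_eq[OF assms] B_def by blast
  have ob: "open (B I m i) \<and> convex (B I m i)" for I m i
  proof (cases "I \<in> trop_type k x m \<and> i \<noteq> m")
    case True
    then have e: "B I m i = {y. vl y I i < vl y I m}" by (simp add: B_def)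
    have "open {y::real^'n. vl y I i < vl y I m}"
      unfolding vl_def by (intro open_Collect_less continuous_intros)
    moreover have "convex {y::real^'n. vl y I i < vl y I m}"
      unfolding convex_def
    proof (intro ballI allI impI, simp only: mem_Collect_eq)
      fix a b :: "real^'n" and u v :: real
      assume h: "vl a I i < vl a I m" "vl b I i < vl b I m" "0 \<le> u" "0 \<le> v" "u + v = 1"
      show "vl (u *\<^sub>R a + v *\<^sub>R b) I i < vl (u *\<^sub>R a + v *\<^sub>R b) I m"
        unfolding vl_comb[OF h(5)]
      proof (cases "u > 0")
        case True
        then have "u * vl a I i < u * vl a I m" using h by simp
        moreover have "v * vl b I i \<le> v * vl b I m" using h by (simp add: mult_left_mono)
        ultimately show "u * vl a I i + v * vl b I i < u * vl a I m + v * vl b I m" by linarith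
      next
        case False
        then have "v > 0" using h by linarith
        then have "v * vl b I i < v * vl b I m" using h by simp
        moreover have "u * vl a I i \<le> u * vl a I m" using h by (simp add: mult_left_mono)
        ultimately show "u * vl a I i + v * vl b I i < u * vl a I m + v * vl b I m" by linarith
      qed
    qed
    ultimately show ?thesis using e by simp
  next
    case False
    then have "B I m i = UNIV" by (auto simp: B_def)
    then show ?thesis by simp
  qed
  have o1: "open (\<Inter>i. B I m i) \<and> convex (\<Inter>i. B I m i)" for I m
    using open_INT[of UNIV "B I m"] convex_INT[of UNIV "B I m"] ob by simp
  have o2: "open (\<Inter>m. \<Inter>i. B I m i) \<and> convex (\<Inter>m. \<Inter>i. B I m i)" for I
    using open_INT[of UNIV "\<lambda>m. \<Inter>i. B I m i"] convex_INT[of UNIV "\<lambda>m. \<Inter>i. B I m i"] o1 by simp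
  have "open (\<Inter>I. \<Inter>m. \<Inter>i. B I m i) \<and> convex (\<Inter>I. \<Inter>m. \<Inter>i. B I m i)"
    using open_INT[of UNIV "\<lambda>I. \<Inter>m. \<Inter>i. B I m i"] convex_INT[of UNIV "\<lambda>I. \<Inter>m. \<Inter>i. B I m i"] o2 by simp
  then show "open (type_region k (trop_type k x))" "convex (type_region k (trop_type k x))" using eq by simp_all
qed



lemma max_cell:
  assumes u: "uniqt k (x::real^'n::finite)"
  shows "closure (type_region k (trop_type k x)) \<in> maximal_cells k"
    "rel_interior (closure (type_region k (trop_type k x))) = type_region k (trop_type k x)"
proof -
  let ?R = "type_region k (trop_type k x)"
  have op: "open ?R" and cv: "convex ?R" using region_open_convex[OF u] by auto
  have xR: "x \<in> ?R" by (simp add: type_region_def)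
  show "rel_interior (closure ?R) = ?R" using convex_rel_interior_closure[OF cv] rel_interior_open[OF op] by simp
  have cell: "closure ?R \<in> trop_cells k" using xR unfolding trop_cells_def by blast
  have "\<not> (closure ?R \<subset> C')" if "C' \<in> trop_cells k" for C'
  proof
    assume sub: "closure ?R \<subset> C'"
    from that obtain T where C': "C' = closure (type_region k T)" "type_region k T \<noteq> {}" unfolding trop_cells_def by blast
    have "?R \<inter> closure (type_region k T) \<noteq> {}" using sub C' xR closure_subset by blast
    then have "?R \<inter> type_region k T \<noteq> {}" using open_Int_closure_eq_empty[OF op] by blast
    then obtain y where "y \<in> ?R" "y \<in> type_region k T" by blast
    then have "T = trop_type k x" by (simp add: type_region_def)
    then show False using sub C' by simp
  qed
  then show "closure ?R \<in> maximal_cells k" using cell unfolding maximal_cells_def by blast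
qed

lemma closure_sub:
  assumes sub: "\<forall>I m. I \<in> trop_type k w m \<longrightarrow> I \<in> trop_type k z m"
  shows "type_region k (trop_type k z) \<subseteq> closure (type_region k (trop_type k (w::real^'n::finite)))"
proof
  fix y assume "y \<in> type_region k (trop_type k z)"
  then have ty: "trop_type k y = trop_type k z" by (simp add: type_region_def)
  have comb: "(1 - t) *\<^sub>R y + t *\<^sub>R w \<in> type_region k (trop_type k w)" if t: "0 < t" "t \<le> 1" for t
  proof -
    let ?p = "(1 - t) *\<^sub>R y + t *\<^sub>R w"
    have vp: "vl ?p I i = (1-t) * vl y I i + t * vl w I i" for I i by (rule vl_comb) simp
    have "I \<in> trop_type k ?p m \<longleftrightarrow> I \<in> trop_type k w m" for I m
    proof
      assume a: "I \<in> trop_type k w m"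
      then have "I \<in> trop_type k y m" using sub ty by simp
      then have "card I = k" "\<forall>i. vl y I i \<le> vl y I m" "\<forall>i. vl w I i \<le> vl w I m" using a by (simp_all add: trop_type_iff)
      then show "I \<in> trop_type k ?p m" unfolding trop_type_iff vp using t
        by (auto intro!: add_mono mult_left_mono)
    next
      assume a: "I \<in> trop_type k ?p m"
      then have c: "card I = k" and am: "\<forall>i. vl ?p I i \<le> vl ?p I m" by (simp_all add: trop_type_iff)
      obtain m' where m': "\<forall>i. vl w I i \<le> vl w I m'" using ex_argmax by blast
      then have "I \<in> trop_type k w m'" using c by (simp add: trop_type_iff)
      then have "I \<in> trop_type k y m'" using sub ty by simp
      then have y': "vl y I m \<le> vl y I m'" by (simp add: trop_type_iff)
      have "vl ?p I m' \<le> vl ?p I m" using am by blast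
      then have "(1-t) * vl y I m' + t * vl w I m' \<le> (1-t) * vl y I m + t * vl w I m" unfolding vp .
      moreover have "(1-t) * vl y I m \<le> (1-t) * vl y I m'" using y' t by (simp add: mult_left_mono)
      ultimately have "t * vl w I m' \<le> t * vl w I m" by linarith
      then have "vl w I m' \<le> vl w I m" using t by simp
      then have "\<forall>i. vl w I i \<le> vl w I m" using m' by (meson order_trans)
      then show "I \<in> trop_type k w m" using c by (simp add: trop_type_iff)
    qed
    then show ?thesis by (auto simp: type_region_def)
  qed
  show "y \<in> closure (type_region k (trop_type k w))"
    unfolding closure_approachable
  proof (intro allI impI)
    fix e :: real assume e: "e > 0"
    define N where "N = norm (w - y)"
    have N: "N \<ge> 0" by (simp add: N_def)
    define t where "t = min 1 (e / (2 * (N + 1)))"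
    have t: "0 < t" "t \<le> 1" using e N by (auto simp: t_def)
    have "dist ((1 - t) *\<^sub>R y + t *\<^sub>R w) y = norm (t *\<^sub>R (w - y))"
      by (simp add: dist_norm algebra_simps)
    also have "\<dots> = t * N" using t by (simp add: N_def)
    also have "\<dots> \<le> (e / (2 * (N + 1))) * N" using N by (intro mult_right_mono) (auto simp: t_def)
    also have "\<dots> < e"
    proof -
      have d: "2 * (N + 1) > 0" using N by simp
      have "e * N < e * (2 * (N + 1))" using e N by simp
      moreover have "(e * N) / (2 * (N + 1)) < e \<longleftrightarrow> e * N < e * (2 * (N + 1))"
        by (rule pos_divide_less_eq[OF d])
      ultimately have "(e * N) / (2 * (N + 1)) < e" by blast
      then show ?thesis by simp
    qed
    finally show "\<exists>x'\<in>type_region k (trop_type k w). dist x' y < e" using comb[OF t] by blast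
  qed
qed

lemma perturb: "\<exists>w. uniqt k w \<and> (\<forall>I m. I \<in> trop_type k w m \<longrightarrow> I \<in> trop_type k (z::real^'n::finite) m)"
proof -
  obtain \<tau> :: "'n \<Rightarrow> nat" and N where \<tau>: "\<tau> ` UNIV = {i. i < N}" "inj \<tau>"
    using finite_imp_inj_to_nat_seg[of "UNIV::'n set"] by auto
  define p where "p i = real (\<tau> i) / real (N+1)" for i
  have p01: "0 \<le> p i" "p i < 1" for i
  proof -
    have "\<tau> i < N" using \<tau>(1) by auto
    then show "0 \<le> p i" "p i < 1" by (auto simp: p_def field_simps)
  qed
  have pinj: "i = j" if "p i = p j" for i j
    using that \<tau>(2) by (auto simp: p_def inj_def)
  define D where "D = {\<bar>vl z I i - vl z I j\<bar> | I i j. vl z I i \<noteq> vl z I j}"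
  have finD: "finite D"
  proof -
    have "D \<subseteq> (\<lambda>(I,i,j). \<bar>vl z I i - vl z I j\<bar>) ` UNIV"
    proof
      fix d assume "d \<in> D"
      then obtain I i j where "d = \<bar>vl z I i - vl z I j\<bar>" unfolding D_def by blast
      then show "d \<in> (\<lambda>(I,i,j). \<bar>vl z I i - vl z I j\<bar>) ` UNIV" by (intro image_eqI[where x="(I,i,j)"]) auto
    qed
    then show ?thesis by (rule finite_subset) simp
  qed
  define \<delta> where "\<delta> = (if D = {} then 1 else Min D)"
  have Dpos: "d > 0" if "d \<in> D" for d using that unfolding D_def by auto
  have dpos: "\<delta> > 0" using Min_in[OF finD] Dpos by (auto simp: \<delta>_def)
  have dle: "\<delta> \<le> \<bar>vl z I i - vl z I j\<bar>" if "vl z I i \<noteq> vl z I j" for I i j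
  proof -
    have "\<bar>vl z I i - vl z I j\<bar> \<in> D" using that unfolding D_def by blast
    then show ?thesis using Min_le[OF finD] by (auto simp: \<delta>_def)
  qed
  define w where "w = z + (\<delta>/2) *\<^sub>R (\<chi> i. p i)"
  have vw: "vl w I i = vl z I i + \<delta>/2 * p i" for I i by (simp add: w_def vl_def)
  have key: "vl z I i \<le> vl z I m" if "vl w I i \<le> vl w I m" for I i m
  proof (rule ccontr)
    assume "\<not> ?thesis"
    then have g: "vl z I i > vl z I m" by simp
    then have "\<delta> \<le> vl z I i - vl z I m" using dle[of I i m] by auto
    moreover have "\<delta>/2 * p m - \<delta>/2 * p i < \<delta>/2" using dpos p01[of m] p01[of i]
    proof -
      have "p m - p i < 1" using p01[of m] p01[of i] by linarith
      then have "\<delta>/2 * (p m - p i) < \<delta>/2 * 1" using dpos by (intro mult_strict_left_mono) auto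
      then show ?thesis by (simp add: algebra_simps)
    qed
    ultimately have "vl w I i > vl w I m" unfolding vw using dpos by linarith
    then show False using that by simp
  qed
  have "uniqt k w"
    unfolding uniqt_def
  proof (intro allI impI)
    fix I m m' assume a: "I \<in> trop_type k w m" "I \<in> trop_type k w m'"
    then have "vl w I m \<le> vl w I m'" "vl w I m' \<le> vl w I m" by (simp_all add: trop_type_iff)
    moreover then have "vl z I m = vl z I m'" using key by (meson order_antisym)
    ultimately have "\<delta>/2 * p m = \<delta>/2 * p m'" unfolding vw by linarith
    then show "m = m'" using dpos pinj by simp
  qed
  moreover have "\<forall>I m. I \<in> trop_type k w m \<longrightarrow> I \<in> trop_type k z m"
    using key by (auto simp: trop_type_iff)
  ultimately show ?thesis by blast
qed



lemma cnt_avoid: "card {I::'n::finite set. card I = k \<and> I \<inter> A = {}} = (CARD('n) - card A) choose k"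
proof -
  have "{I::'n set. card I = k \<and> I \<inter> A = {}} = {I. I \<subseteq> UNIV - A \<and> card I = k}" by auto
  moreover have "card (UNIV - A) = CARD('n) - card A" by (simp add: card_Diff_subset)
  ultimately show ?thesis using n_subsets[of "UNIV - A" k] by simp
qed

lemma cnt_with:
  assumes "a \<notin> U" "1 \<le> k"
  shows "card {I::'n::finite set. card I = k \<and> a \<in> I \<and> I \<inter> U = {}} = (CARD('n) - card U - 1) choose (k - 1)"
proof -
  let ?S = "{J. J \<subseteq> UNIV - U - {a} \<and> card J = k - 1}"
  have eq: "{I::'n set. card I = k \<and> a \<in> I \<and> I \<inter> U = {}} = insert a ` ?S"
  proof (intro set_eqI iffI)
    fix I assume h: "I \<in> {I::'n set. card I = k \<and> a \<in> I \<and> I \<inter> U = {}}"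
    then have aI: "a \<in> I" and cI: "card I = k" and IU: "I \<inter> U = {}" by simp_all
    have e: "I = insert a (I - {a})" using aI by blast
    have "card (I - {a}) = k - 1" using aI cI by (simp add: card_Diff_singleton)
    moreover have "I - {a} \<subseteq> UNIV - U - {a}" using IU by blast
    ultimately have "I - {a} \<in> ?S" by simp
    then show "I \<in> insert a ` ?S" using e by blast
  next
    fix I assume "I \<in> insert a ` ?S"
    then obtain J where J: "I = insert a J" "J \<subseteq> UNIV - U - {a}" "card J = k - 1" by blast
    have aJ: "a \<notin> J" using J(2) by blast
    have "card (insert a J) = Suc (card J)" using aJ by (simp add: card_insert_disjoint)
    then have "card I = k" using J assms(2) by simp
    moreover have "I \<inter> U = {}" using J(1,2) assms(1) by blast
    ultimately show "I \<in> {I::'n set. card I = k \<and> a \<in> I \<and> I \<inter> U = {}}" using J(1) by simp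
  qed
  have inj: "inj_on (insert a) ?S"
  proof (rule inj_onI)
    fix J J' assume "J \<in> ?S" "J' \<in> ?S" "insert a J = insert a J'"
    then have "a \<notin> J" "a \<notin> J'" "insert a J = insert a J'" by blast+
    then show "J = J'" by (metis Diff_insert_absorb)
  qed
  have cU: "card (UNIV - U - {a}) = CARD('n) - card U - 1"
  proof -
    have "card (UNIV - U - {a}) = card (UNIV - U) - 1" using assms by (intro card_Diff_singleton) auto
    moreover have "card (UNIV - U) = CARD('n) - card U" by (simp add: card_Diff_subset)
    ultimately show ?thesis by simp
  qed
  show ?thesis unfolding eq card_image[OF inj] using n_subsets[of "UNIV - U - {a}" "k - 1"] cU by simp
qed

lemma ex_kset:
  assumes "F \<subseteq> S" "finite S" "card F \<le> k" "k \<le> card S"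
  shows "\<exists>I. F \<subseteq> I \<and> I \<subseteq> S \<and> card I = k"
proof -
  have fF: "finite F" using assms finite_subset by blast
  have "k - card F \<le> card (S - F)" using assms by (simp add: card_Diff_subset fF)
  then obtain J where J: "J \<subseteq> S - F" "card J = k - card F" "finite J" by (rule obtain_subset_with_card_n)
  have "card (F \<union> J) = card F + card J" using J fF by (intro card_Un_disjoint) auto
  then show ?thesis using J assms by (intro exI[of _ "F \<union> J"]) auto
qed

lemma type_a:
  fixes x :: "real^'n::finite"
  assumes xa: "x$a = M" and mx: "\<forall>i. i \<noteq> a \<longrightarrow> x$i < M"
  shows "trop_type k x a = {I. card I = k \<and> (a \<in> I \<or> I \<inter> {i. M - 1 < x$i} = {})}"
proof -
  have xle: "x$i \<le> M" for i using mx xa by (cases "i = a") force+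
  have "(\<forall>i. vl x I i \<le> vl x I a) \<longleftrightarrow> (a \<in> I \<or> I \<inter> {i. M - 1 < x$i} = {})" for I
  proof
    assume h: "\<forall>i. vl x I i \<le> vl x I a"
    show "a \<in> I \<or> I \<inter> {i. M - 1 < x$i} = {}"
    proof (rule ccontr)
      assume "\<not> ?thesis"
      then obtain i where "a \<notin> I" "i \<in> I" "M - 1 < x$i" by auto
      then show False using h[rule_format, of i] xa by (simp add: vl_def)
    qed
  next
    assume h: "a \<in> I \<or> I \<inter> {i. M - 1 < x$i} = {}"
    show "\<forall>i. vl x I i \<le> vl x I a"
    proof
      fix i show "vl x I i \<le> vl x I a"
      proof (cases "a \<in> I")
        case True then show ?thesis using xle[of i] xa by (simp add: vl_def)
      next
        case False
        then have "i \<in> I \<Longrightarrow> x$i \<le> M - 1" using h by force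
        then show ?thesis using False xle[of i] xa by (auto simp: vl_def)
      qed
    qed
  qed
  then show ?thesis by (auto simp: trop_type_iff)
qed

lemma type_m:
  fixes x :: "real^'n::finite"
  assumes xa: "x$a = M" and mx: "\<forall>i. i \<noteq> a \<longrightarrow> x$i < M" and u: "uniqt k x"
    and ma: "m \<noteq> a" and mA: "M - 1 < x$m"
  shows "trop_type k x m = {I. card I = k \<and> m \<in> I \<and> I \<inter> {i. i \<noteq> m \<and> x$m \<le> x$i} = {}}"
proof -
  have xle: "x$i \<le> M" for i using mx xa by (cases "i = a") force+
  have "I \<in> trop_type k x m \<longleftrightarrow> card I = k \<and> m \<in> I \<and> I \<inter> {i. i \<noteq> m \<and> x$m \<le> x$i} = {}" for I
  proof
    assume h: "I \<in> trop_type k x m"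
    then have c: "card I = k" and am: "\<forall>i. vl x I i \<le> vl x I m" by (simp_all add: trop_type_iff)
    have mI: "m \<in> I"
    proof (rule ccontr)
      assume "m \<notin> I"
      then have "vl x I m = x$m" by (simp add: vl_def)
      moreover have "vl x I a \<ge> M" using xa by (simp add: vl_def)
      ultimately show False using am[rule_format, of a] mx ma by force
    qed
    have "I \<inter> {i. i \<noteq> m \<and> x$m \<le> x$i} = {}"
    proof (rule ccontr)
      assume "\<not> ?thesis"
      then obtain i where i: "i \<in> I" "i \<noteq> m" "x$m \<le> x$i" by auto
      then have "vl x I i = vl x I m" using am[rule_format, of i] mI by (simp add: vl_def)
      then have "I \<in> trop_type k x i" using am c by (simp add: trop_type_iff)
      then show False using h u i(2) unfolding uniqt_def by blast
    qed
    then show "card I = k \<and> m \<in> I \<and> I \<inter> {i. i \<noteq> m \<and> x$m \<le> x$i} = {}" using c mI by simp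
  next
    assume h: "card I = k \<and> m \<in> I \<and> I \<inter> {i. i \<noteq> m \<and> x$m \<le> x$i} = {}"
    have "vl x I i \<le> vl x I m" for i
    proof (cases "i \<in> I")
      case True
      then have "i = m \<or> x$i < x$m" using h by force
      then show ?thesis using True h by (auto simp: vl_def)
    next
      case False then show ?thesis using h xle[of i] mA by (auto simp: vl_def)
    qed
    then show "I \<in> trop_type k x m" using h by (simp add: trop_type_iff)
  qed
  then show ?thesis by blast
qed

lemma type_out:
  fixes x :: "real^'n::finite"
  assumes xa: "x$a = M" and mx: "\<forall>i. i \<noteq> a \<longrightarrow> x$i < M" and u: "uniqt k x"
    and mA: "\<not> M - 1 < x$m"
  shows "trop_type k x m = {}"
proof (rule ccontr)
  assume "\<not> ?thesis"
  then obtain I where h: "I \<in> trop_type k x m" by auto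
  then have c: "card I = k" and am: "\<forall>i. vl x I i \<le> vl x I m" by (simp_all add: trop_type_iff)
  have "vl x I m \<le> M" using mA by (simp add: vl_def)
  moreover have "vl x I a \<ge> M" using xa by (simp add: vl_def)
  moreover have "vl x I a \<le> vl x I m" using am by blast
  ultimately have "vl x I a = vl x I m" by linarith
  then have "I \<in> trop_type k x a" using am c by (simp add: trop_type_iff)
  then have "a = m" using h u unfolding uniqt_def by blast
  then show False using mA xa by simp
qed

lemma card_a:
  fixes x :: "real^'n::finite"
  assumes xa: "x$a = M" and mx: "\<forall>i. i \<noteq> a \<longrightarrow> x$i < M" and k: "1 \<le> k"
  shows "card (trop_type k x a) = ((CARD('n) - 1) choose (k - 1)) + ((CARD('n) - card {i. M - 1 < x$i}) choose k)"
proof -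
  let ?A = "{i. M - 1 < x$i}"
  have "trop_type k x a = {I. card I = k \<and> a \<in> I \<and> I \<inter> {} = {}} \<union> {I. card I = k \<and> I \<inter> ?A = {}}"
    unfolding type_a[OF xa mx] by auto
  moreover have "a \<in> ?A" using xa by simp
  then have "{I. card I = k \<and> a \<in> I \<and> I \<inter> {} = {}} \<inter> {I::'n set. card I = k \<and> I \<inter> ?A = {}} = {}" by blast
  ultimately have "card (trop_type k x a) = card {I::'n set. card I = k \<and> a \<in> I \<and> I \<inter> {} = {}} + card {I::'n set. card I = k \<and> I \<inter> ?A = {}}"
    by (simp add: card_Un_disjoint)
  then show ?thesis using cnt_with[of a "{}" k] cnt_avoid[of k ?A] k by simp
qed



lemma coarse_form:
  fixes x :: "real^'n::finite"
  assumes k: "2 \<le> k" "k < CARD('n)" and u: "uniqt k x"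
  shows "\<exists>\<alpha> \<sigma>. 1 \<le> \<alpha> \<and> \<alpha> \<le> (CARD('n) - 1) + 2 - k \<and>
               bij_betw \<sigma> (UNIV :: 'n set) {0..CARD('n) - 1} \<and>
               coarse_type k x = (\<lambda>m. hyp_tuple (CARD('n) - 1) k \<alpha> (\<sigma> m))"
proof -
  define n where "n = CARD('n)"
  have n3: "n \<ge> 3" using k by (simp add: n_def)
  have kn: "k < n" using k by (simp add: n_def)
  let ?f = "\<lambda>i. x$i"
  define M where "M = Max (range ?f)"
  have "M \<in> range ?f" unfolding M_def by (intro Max_in) auto
  then obtain a where xa: "x$a = M" by auto
  have xle: "x$i \<le> M" for i unfolding M_def by (rule Max_ge) auto
  have mx: "\<forall>i. i \<noteq> a \<longrightarrow> x$i < M"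
  proof (intro allI impI, rule ccontr)
    fix i assume ia: "i \<noteq> a" "\<not> x$i < M"
    then have xi: "x$i = M" using xle[of i] by simp
    have "card {a,i} = 2" using ia by simp
    then obtain I where I: "{a,i} \<subseteq> I" "card I = k"
      using ex_kset[of "{a,i}" UNIV k] k by auto
    have "vl x I j \<le> M + 1" for j using xle[of j] by (simp add: vl_def)
    moreover have "vl x I a = M + 1" "vl x I i = M + 1" using I xa xi by (auto simp: vl_def)
    ultimately have "I \<in> trop_type k x a" "I \<in> trop_type k x i" using I(2) by (auto simp: trop_type_iff)
    then show False using u ia unfolding uniqt_def by blast
  qed
  define A where "A = {i. M - 1 < x$i}"
  have aA: "a \<in> A" using xa by (simp add: A_def)
  have cA: "1 \<le> card A" using aA card_gt_0_iff[of A] by auto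
  have cAn: "card A \<le> n" unfolding n_def by (rule card_mono) auto
  obtain \<tau> :: "'n \<Rightarrow> nat" and N where \<tau>: "\<tau> ` UNIV = {i. i < N}" "inj \<tau>"
    using finite_imp_inj_to_nat_seg[of "UNIV::'n set"] by auto
  define lt where "lt i j = (x$j < x$i \<or> (x$i = x$j \<and> \<tau> i < \<tau> j))" for i j
  have lt_irr: "\<not> lt i i" for i by (simp add: lt_def)
  have gtr: "r < p \<or> p = r \<and> s < v" if "q < p \<or> p = q \<and> s < t" "r < q \<or> q = r \<and> t < v"
    for p q r :: real and s t v :: nat using that by auto
  have lt_trans: "lt i l" if "lt i j" "lt j l" for i j l using gtr that unfolding lt_def by blast
  have lt_tot: "lt i j \<or> lt j i" if "i \<noteq> j" for i j
  proof -
    have "\<tau> i \<noteq> \<tau> j" using that \<tau>(2) by (auto simp: inj_def)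
    moreover have "q < p \<or> p = q \<and> s < t \<or> p < q \<or> q = p \<and> t < s" if "s \<noteq> t" for p q :: real and s t :: nat
      using that by auto
    ultimately show ?thesis unfolding lt_def by blast
  qed
  define \<sigma> where "\<sigma> m = card {i. lt i m}" for m
  have \<sigma>_mono: "\<sigma> i < \<sigma> j" if "lt i j" for i j
  proof -
    have "{l. lt l i} \<subset> {l. lt l j}" using that lt_trans lt_irr by blast
    then show ?thesis unfolding \<sigma>_def by (intro psubset_card_mono) auto
  qed
  have \<sigma>_inj: "inj \<sigma>"
  proof (rule injI, rule ccontr)
    fix i j assume "\<sigma> i = \<sigma> j" "i \<noteq> j"
    then show False using lt_tot[of i j] \<sigma>_mono[of i j] \<sigma>_mono[of j i] by auto
  qed
  have \<sigma>_le: "\<sigma> m \<le> n - 1" for m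
  proof -
    have "{i. lt i m} \<subseteq> UNIV - {m}" using lt_irr by blast
    then have "\<sigma> m \<le> card (UNIV - {m})" unfolding \<sigma>_def by (intro card_mono) auto
    also have "card (UNIV - {m}) = n - 1" unfolding n_def by (simp add: card_Diff_singleton)
    finally show ?thesis .
  qed
  have \<sigma>_bij: "bij_betw \<sigma> (UNIV::'n set) {0..n - 1}"
    unfolding bij_betw_def
  proof
    show "inj_on \<sigma> UNIV" using \<sigma>_inj by simp
    have sub: "\<sigma> ` UNIV \<subseteq> {0..n-1}" using \<sigma>_le by auto
    have "card (\<sigma> ` UNIV) = n" unfolding n_def using \<sigma>_inj by (simp add: card_image)
    moreover have "card {0..n-1} = n" using n3 by simp
    ultimately show "\<sigma> ` UNIV = {0..n-1}" using sub by (intro card_subset_eq) auto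
  qed
  have \<sigma>a: "\<sigma> a = 0"
  proof -
    have "{i. lt i a} = {}"
    proof (rule ccontr)
      assume "\<not> ?thesis"
      then obtain i where "lt i a" by auto
      then show False using xle[of i] xa mx unfolding lt_def by force
    qed
    then show ?thesis by (simp add: \<sigma>_def)
  qed
  define \<alpha> where "\<alpha> = min (card A) (n + 1 - k)"
  have al1: "1 \<le> \<alpha>" unfolding \<alpha>_def using cA kn by arith
  have al2: "\<alpha> \<le> (n - 1) + 2 - k" unfolding \<alpha>_def using n3 by arith
  have k1: "1 \<le> k" using k by simp
  have cnt: "card (trop_type k x m) = hyp_tuple (n - 1) k \<alpha> (\<sigma> m)" for m
  proof (cases "m = a")
    case True
    have c: "card (trop_type k x a) = ((n - 1) choose (k - 1)) + ((n - card A) choose k)"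
      using card_a[OF xa mx k1] by (simp add: A_def n_def)
    have "(n - card A) choose k = (n - 1 + 1 - \<alpha>) choose k"
    proof (cases "card A \<le> n + 1 - k")
      case True then show ?thesis using n3 by (simp add: \<alpha>_def)
    next
      case False
      then have "\<alpha> = n + 1 - k" by (simp add: \<alpha>_def)
      then have "n - 1 + 1 - \<alpha> = k - 1" using n3 k by (simp add: n_def)
      moreover have "n - card A < k" using False kn k cAn by arith
      ultimately show ?thesis using k by (simp add: binomial_eq_0)
    qed
    then show ?thesis using c True \<sigma>a by (simp add: hyp_tuple_def)
  next
    case ma: False
    show ?thesis
    proof (cases "m \<in> A")
      case mA: True
      define U where "U = {i. i \<noteq> m \<and> x$m \<le> x$i}"
      have xmA: "M - 1 < x$m" using mA by (simp add: A_def)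
      have cT: "card (trop_type k x m) = (n - card U - 1) choose (k - 1)"
        unfolding type_m[OF xa mx u ma xmA] n_def U_def[symmetric]
        by (rule cnt_with) (use k in \<open>auto simp: U_def\<close>)
      have r1: "\<sigma> m \<ge> 1"
      proof -
        have "lt a m" using mx ma xa unfolding lt_def by auto
        then have "0 < \<sigma> m" using \<sigma>_mono[of a m] \<sigma>a by simp
        then show ?thesis by simp
      qed
      have rA: "\<sigma> m < card A"
      proof -
        have "{i. lt i m} \<subseteq> A - {m}" using lt_irr xmA unfolding lt_def A_def by force
        then have "\<sigma> m \<le> card (A - {m})" unfolding \<sigma>_def by (intro card_mono) auto
        also have "\<dots> = card A - 1" using mA by (simp add: card_Diff_singleton)
        finally show ?thesis using cA by simp
      qed
      define P where "P = {i. x$m < x$i}"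
      have PU: "card P \<le> \<sigma> m" "\<sigma> m \<le> card U"
      proof -
        have "P \<subseteq> {i. lt i m}" unfolding P_def lt_def by auto
        then show "card P \<le> \<sigma> m" unfolding \<sigma>_def by (intro card_mono) auto
        have "{i. lt i m} \<subseteq> U" unfolding U_def lt_def by auto
        then show "\<sigma> m \<le> card U" unfolding \<sigma>_def by (intro card_mono) auto
      qed
      have hyp: "hyp_tuple (n - 1) k \<alpha> (\<sigma> m) = (if \<sigma> m < \<alpha> then (n - 1 - \<sigma> m) choose (k - 1) else 0)"
        using r1 by (simp add: hyp_tuple_def)
      show ?thesis
      proof (cases "\<exists>j. j \<noteq> m \<and> x$j = x$m")
        case True
        then obtain j where j: "j \<noteq> m" "x$j = x$m" by blast
        have small: "n - card P < k"
        proof (rule ccontr)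
          assume "\<not> ?thesis"
          then have "k \<le> card (UNIV - P)" unfolding n_def by (simp add: card_Diff_subset)
          moreover have "{m,j} \<subseteq> UNIV - P" using j unfolding P_def by auto
          moreover have "card {m,j} \<le> k" using j k by simp
          ultimately obtain I where I: "{m,j} \<subseteq> I" "I \<subseteq> UNIV - P" "card I = k"
            using ex_kset[of "{m,j}" "UNIV - P" k] by auto
          have "vl x I i \<le> x$m + 1" for i
          proof (cases "i \<in> I")
            case True then have "x$i \<le> x$m" using I unfolding P_def by force
            then show ?thesis using True by (simp add: vl_def)
          next
            case False then show ?thesis using xle[of i] xmA by (simp add: vl_def)
          qed
          moreover have "vl x I m = x$m + 1" "vl x I j = x$m + 1" using I j by (auto simp: vl_def)
          ultimately have "I \<in> trop_type k x m" "I \<in> trop_type k x j" using I(3) by (auto simp: trop_type_iff)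
          then show False using u j unfolding uniqt_def by blast
        qed
        then have "n - card U - 1 < k - 1" "n - 1 - \<sigma> m < k - 1" using PU k by arith+
        then show ?thesis using cT hyp by (simp add: binomial_eq_0)
      next
        case False
        have "U = {i. lt i m}" unfolding U_def lt_def using False by force
        then have cU: "card U = \<sigma> m" by (simp add: \<sigma>_def)
        show ?thesis
        proof (cases "\<sigma> m < \<alpha>")
          case True then show ?thesis using cT hyp cU by (simp add: diff_commute)
        next
          case False
          then have "\<alpha> = n + 1 - k" using rA by (auto simp: \<alpha>_def)
          then have "n - card U - 1 < k - 1" using False cU k by arith
          then show ?thesis using cT hyp False by (simp add: binomial_eq_0)
        qed
      qed
    next
      case mA: False
      have xmA: "\<not> M - 1 < x$m" using mA by (simp add: A_def)
      have c0: "card (trop_type k x m) = 0" using type_out[OF xa mx u xmA] by simp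
      have "A \<subseteq> {i. lt i m}" using xmA unfolding A_def lt_def by auto
      then have "card A \<le> \<sigma> m" unfolding \<sigma>_def by (intro card_mono) auto
      then have "\<sigma> m \<noteq> 0" "\<not> \<sigma> m < \<alpha>" using cA by (auto simp: \<alpha>_def)
      then show ?thesis using c0 by (simp add: hyp_tuple_def)
    qed
  qed
  show ?thesis
    apply (rule exI[of _ \<alpha>], rule exI[of _ \<sigma>])
    using al1 al2 \<sigma>_bij cnt by (auto simp: n_def coarse_type_def)
qed



lemma coarse_realize:
  assumes k: "2 \<le> k" "k < CARD('n::finite)" and al: "1 \<le> \<alpha>" "\<alpha> \<le> (CARD('n) - 1) + 2 - k"
    and \<sigma>: "bij_betw \<sigma> (UNIV::'n set) {0..CARD('n) - 1}"
  shows "\<exists>x::real^'n. uniqt k x \<and> coarse_type k x = (\<lambda>m. hyp_tuple (CARD('n) - 1) k \<alpha> (\<sigma> m))"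
proof -
  define n where "n = CARD('n)"
  have n3: "n \<ge> 3" using k by (simp add: n_def)
  have kn: "k < n" using k by (simp add: n_def)
  have k1: "1 \<le> k" using k by simp
  have al2: "\<alpha> \<le> n - 1 + 2 - k" using al by (simp add: n_def)
  have aln: "\<alpha> \<le> n" using al2 n3 kn k1 by arith
  have npos: "real n > 0" using n3 by simp
  have \<sigma>inj: "inj \<sigma>" and \<sigma>img: "\<sigma> ` UNIV = {0..n-1}" using \<sigma> by (auto simp: bij_betw_def n_def)
  have \<sigma>lt: "\<sigma> m < n" for m
  proof -
    have "\<sigma> m \<in> {0..n-1}" using \<sigma>img by blast
    then show ?thesis using n3 by auto
  qed
  have cnt_lt: "card {i. \<sigma> i < r} = r" if "r \<le> n" for r
  proof -
    have "\<sigma> ` {i. \<sigma> i < r} = {0..<r}"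
    proof
      show "\<sigma> ` {i. \<sigma> i < r} \<subseteq> {0..<r}" by auto
      show "{0..<r} \<subseteq> \<sigma> ` {i. \<sigma> i < r}"
      proof
        fix j assume j: "j \<in> {0..<r}"
        then have "j \<in> {0..n-1}" using that by auto
        then obtain i where "j = \<sigma> i" using \<sigma>img by blast
        then show "j \<in> \<sigma> ` {i. \<sigma> i < r}" using j by auto
      qed
    qed
    moreover have "inj_on \<sigma> {i. \<sigma> i < r}" using \<sigma>inj by (simp add: inj_on_def inj_def)
    ultimately show ?thesis using card_image by fastforce
  qed
  have "0 \<in> \<sigma> ` UNIV" using \<sigma>img by simp
  then obtain a where \<sigma>a: "\<sigma> a = 0" by auto
  define x :: "real^'n" where "x = (\<chi> m. if \<sigma> m < \<alpha> then - real (\<sigma> m) / real n else -2)"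
  have xv: "x$m = (if \<sigma> m < \<alpha> then - real (\<sigma> m) / real n else -2)" for m by (simp add: x_def)
  have xa: "x$a = 0" using \<sigma>a al by (simp add: xv)
  have cmp: "(- real p / real n \<le> - real q / real n) \<longleftrightarrow> q \<le> p" for p q
    using npos by (simp add: divide_le_cancel)
  have xbd: "-1 < x$i \<and> x$i \<le> 0" if "\<sigma> i < \<alpha>" for i
  proof -
    have "real (\<sigma> i) < real n" using \<sigma>lt[of i] by simp
    then have "real (\<sigma> i) / real n < 1" using npos by simp
    then show ?thesis using that npos by (simp add: xv)
  qed
  have mx: "\<forall>i. i \<noteq> a \<longrightarrow> x$i < 0"
  proof (intro allI impI)
    fix i assume "i \<noteq> a"
    then have "\<sigma> i \<noteq> 0" using \<sigma>a \<sigma>inj by (metis injD)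
    then show "x$i < 0" using npos by (simp add: xv)
  qed
  have Aiff: "(0 - 1 < x$i) \<longleftrightarrow> \<sigma> i < \<alpha>" for i
    using xbd[of i] by (auto simp: xv)
  have vl_cases: "vl x I i = x$i \<or> vl x I i = x$i + 1" for I i by (simp add: vl_def)
  have u: "uniqt k x"
    unfolding uniqt_def
  proof (intro allI impI)
    fix I m m' assume h: "I \<in> trop_type k x m" "I \<in> trop_type k x m'"
    then have am: "\<forall>i. vl x I i \<le> vl x I m" and am': "\<forall>i. vl x I i \<le> vl x I m'" by (simp_all add: trop_type_iff)
    have e: "vl x I m = vl x I m'" using am am' by (meson order_antisym)
    have va: "vl x I a \<ge> 0" using xa by (simp add: vl_def)
    have inA: "\<sigma> j < \<alpha>" if "vl x I j \<ge> 0" for j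
    proof (rule ccontr)
      assume "\<not> ?thesis"
      then have "x$j = -2" by (simp add: xv)
      then show False using that vl_cases[of I j] by auto
    qed
    have m1: "\<sigma> m < \<alpha>" using inA am va by (meson order_trans)
    have m2: "\<sigma> m' < \<alpha>" using inA am' va by (meson order_trans)
    show "m = m'"
    proof (rule ccontr)
      assume ne: "m \<noteq> m'"
      then have "\<sigma> m \<noteq> \<sigma> m'" using \<sigma>inj by (metis injD)
      then have "x$m \<noteq> x$m'" using m1 m2 npos by (auto simp: xv)
      moreover have "-1 < x$m" "x$m \<le> 0" "-1 < x$m'" "x$m' \<le> 0" using xbd m1 m2 by auto
      ultimately show False using vl_cases[of I m] vl_cases[of I m'] e by (elim disjE) linarith+
    qed
  qed
  have cnt: "card (trop_type k x m) = hyp_tuple (n - 1) k \<alpha> (\<sigma> m)" for m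
  proof (cases "m = a")
    case True
    have "{i. 0 - 1 < x$i} = {i. \<sigma> i < \<alpha>}" using Aiff by blast
    then have "card {i. 0 - 1 < x$i} = \<alpha>" using cnt_lt aln by simp
    then have "card (trop_type k x a) = ((n - 1) choose (k - 1)) + ((n - \<alpha>) choose k)"
      using card_a[OF xa mx k1] by (simp add: n_def)
    moreover have "n - 1 + 1 - \<alpha> = n - \<alpha>" using n3 by simp
    ultimately show ?thesis using True \<sigma>a by (simp add: hyp_tuple_def)
  next
    case ma: False
    show ?thesis
    proof (cases "\<sigma> m < \<alpha>")
      case mA: True
      have xmA: "0 - 1 < x$m" using Aiff mA by blast
      define U where "U = {i. i \<noteq> m \<and> x$m \<le> x$i}"
      have cT: "card (trop_type k x m) = (n - card U - 1) choose (k - 1)"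
        unfolding type_m[OF xa mx u ma xmA] n_def U_def[symmetric]
        by (rule cnt_with) (use k in \<open>auto simp: U_def\<close>)
      have "U = {i. \<sigma> i < \<sigma> m}"
      proof (intro set_eqI iffI)
        fix i assume "i \<in> U"
        then have i: "i \<noteq> m" "x$m \<le> x$i" by (auto simp: U_def)
        then have iA: "\<sigma> i < \<alpha>" using xmA Aiff[of i] by auto
        then have "\<sigma> i \<le> \<sigma> m" using i mA cmp by (simp add: xv)
        moreover have "\<sigma> i \<noteq> \<sigma> m" using i \<sigma>inj by (metis injD)
        ultimately show "i \<in> {i. \<sigma> i < \<sigma> m}" by simp
      next
        fix i assume "i \<in> {i. \<sigma> i < \<sigma> m}"
        then have i: "\<sigma> i < \<sigma> m" by simp
        then have "i \<noteq> m" by auto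
        moreover have "x$m \<le> x$i" using i mA cmp by (simp add: xv)
        ultimately show "i \<in> U" by (simp add: U_def)
      qed
      then have cU: "card U = \<sigma> m" using cnt_lt \<sigma>lt[of m] by simp
      have "\<sigma> m \<noteq> 0" using ma \<sigma>a \<sigma>inj by (metis injD)
      then show ?thesis using cT cU mA by (simp add: hyp_tuple_def diff_commute)
    next
      case mA: False
      have xmA: "\<not> 0 - 1 < x$m" using Aiff mA by blast
      have "card (trop_type k x m) = 0" using type_out[OF xa mx u xmA] by simp
      moreover have "\<sigma> m \<noteq> 0" using mA al by auto
      ultimately show ?thesis using mA by (simp add: hyp_tuple_def)
    qed
  qed
  show ?thesis using u cnt by (intro exI[of _ x]) (auto simp: coarse_type_def n_def)
qed

theorem mainTheorem4:
  fixes k :: nat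
  assumes "2 \<le> k" and "k < CARD('n::finite)"
  shows "{coarse_type k x | C x. C \<in> (maximal_cells k :: (real^'n) set set) \<and> x \<in> rel_interior C}
       = {c. \<exists>\<alpha> \<sigma>. 1 \<le> \<alpha> \<and> \<alpha> \<le> (CARD('n) - 1) + 2 - k \<and>
               bij_betw \<sigma> (UNIV :: 'n set) {0..CARD('n) - 1} \<and>
               c = (\<lambda>m. hyp_tuple (CARD('n) - 1) k \<alpha> (\<sigma> m))}"
proof (intro set_eqI iffI)
  fix c assume "c \<in> {coarse_type k x | C x. C \<in> (maximal_cells k :: (real^'n) set set) \<and> x \<in> rel_interior C}"
  then obtain C and x :: "real^'n" where c: "c = coarse_type k x" and C: "C \<in> maximal_cells k" and x: "x \<in> rel_interior C" by blast
  from C have Ct: "C \<in> trop_cells k" and Cmax: "\<forall>C'\<in>trop_cells k. \<not> C \<subset> C'" unfolding maximal_cells_def by blast+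
  then obtain T where CT: "C = closure (type_region k T)" "type_region k T \<noteq> {}" unfolding trop_cells_def by blast
  then obtain z where "z \<in> type_region k T" by blast
  then have Tz: "T = trop_type k z" by (simp add: type_region_def)
  obtain w :: "real^'n" where w: "uniqt k w" "\<forall>I m. I \<in> trop_type k w m \<longrightarrow> I \<in> trop_type k z m" using perturb by blast
  let ?Rw = "type_region k (trop_type k w)"
  have "C \<subseteq> closure ?Rw" unfolding CT Tz using closure_sub[OF w(2)] by (intro closure_minimal) auto
  moreover have "closure ?Rw \<in> trop_cells k" using max_cell(1)[OF w(1)] unfolding maximal_cells_def by blast
  ultimately have "C = closure ?Rw" using Cmax by blast
  then have "x \<in> ?Rw" using x max_cell(2)[OF w(1)] by simp
  then have tx: "trop_type k x = trop_type k w" by (simp add: type_region_def)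
  have "uniqt k x" using w(1) tx by (simp add: uniqt_def)
  from coarse_form[OF assms this] show "c \<in> {c. \<exists>\<alpha> \<sigma>. 1 \<le> \<alpha> \<and> \<alpha> \<le> (CARD('n) - 1) + 2 - k \<and>
               bij_betw \<sigma> (UNIV :: 'n set) {0..CARD('n) - 1} \<and>
               c = (\<lambda>m. hyp_tuple (CARD('n) - 1) k \<alpha> (\<sigma> m))}" using c by auto
next
  fix c assume "c \<in> {c. \<exists>\<alpha> \<sigma>. 1 \<le> \<alpha> \<and> \<alpha> \<le> (CARD('n) - 1) + 2 - k \<and>
               bij_betw \<sigma> (UNIV :: 'n set) {0..CARD('n) - 1} \<and>
               c = (\<lambda>m. hyp_tuple (CARD('n) - 1) k \<alpha> (\<sigma> m))}"
  then obtain \<alpha> \<sigma> where h: "1 \<le> \<alpha>" "\<alpha> \<le> (CARD('n) - 1) + 2 - k" "bij_betw \<sigma> (UNIV :: 'n set) {0..CARD('n) - 1}"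
    "c = (\<lambda>m. hyp_tuple (CARD('n) - 1) k \<alpha> (\<sigma> m))" by blast
  obtain x :: "real^'n" where x: "uniqt k x" "coarse_type k x = (\<lambda>m. hyp_tuple (CARD('n) - 1) k \<alpha> (\<sigma> m))"
    using coarse_realize[OF assms h(1,2,3)] by blast
  let ?C = "closure (type_region k (trop_type k x))"
  have "?C \<in> maximal_cells k" using max_cell(1)[OF x(1)] .
  moreover have "x \<in> rel_interior ?C" using max_cell(2)[OF x(1)] by (simp add: type_region_def)
  moreover have "c = coarse_type k x" using h(4) x(2) by simp
  ultimately show "c \<in> {coarse_type k x | C x. C \<in> (maximal_cells k :: (real^'n) set set) \<and> x \<in> rel_interior C}"
    by blast
qed


end
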